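(* For every integer $r\ge7$ there exists $x\in(0,1)$ with $g_r(x)>x$, where $g_r(x)=\mathbb E_{Z\sim\mathcal N(0,1)}\tanh\big(s_r(x)+\sqrt{s_r(x)}Z\big)$ and $s_r(x)=\frac{1}{2(r-1)}\big((1+x)^{r-1}-(1-x)^{r-1}\big)$. *)

theory Defs
  imports "HOL-Probability.Probability"
begin

definition s_fun :: "nat \<Rightarrow> real \<Rightarrow> real" where
  "s_fun r x = ((1 + x) ^ (r - 1) - (1 - x) ^ (r - 1)) / (2 * (real r - 1))"

definition g_fun :: "nat \<Rightarrow> real \<Rightarrow> real" where
  "g_fun r x = (\<integral>z. std_normal_density z * tanh (s_fun r x + sqrt (s_fun r x) * z) \<partial>lborel)"

end

theory Submission
  imports Defs
begin

lemma one_minus_tanh: "1 - tanh (y::real) = 2 / (1 + exp y ^ 2)"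
proof -
  have e: "exp (-2*y) * exp y ^ 2 = 1"
    by (simp add: power2_eq_square exp_add[symmetric])
  have p: "exp (-2*y) > 0" by simp
  have q: "1 + exp (-2*y) > 0" using p by linarith
  have "1 - tanh y = 2 * exp (-2*y) / (1 + exp (-2*y))"
    unfolding tanh_real_altdef using q by (simp add: divide_simps)
  also have "\<dots> = 2 * exp (-2*y) / (exp (-2*y) * (1 + exp y ^ 2))"
    using e by (simp add: algebra_simps)
  also have "\<dots> = 2 / (1 + exp y ^ 2)"
    using p by simp
  finally show ?thesis .
qed

lemma pointwise:
  assumes "s > 0"
  shows "std_normal_density z * (1 - tanh (s + sqrt s * z))
     \<le> exp (-s/2) / sqrt (2*pi) * (2 * exp (s + sqrt s * z) / (1 + exp (s + sqrt s * z) ^ 2))"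
proof -
  define Y where "Y = s + sqrt s * z"
  have sq: "sqrt s ^ 2 = s" using assms by simp
  have "- z\<^sup>2/2 \<le> -s/2 + Y"
  proof -
    have "0 \<le> (z + sqrt s)^2" by simp
    then show ?thesis unfolding Y_def using sq by (simp add: power2_eq_square algebra_simps)
  qed
  hence "exp (- z\<^sup>2/2) \<le> exp (-s/2) * exp Y" by (simp add: exp_add[symmetric])
  hence "exp (- z\<^sup>2/2) / sqrt (2*pi) \<le> exp (-s/2) / sqrt (2*pi) * exp Y"
    by (simp add: divide_right_mono)
  hence "exp (- z\<^sup>2/2) / sqrt (2*pi) * (2 / (1 + exp Y ^ 2))
      \<le> exp (-s/2) / sqrt (2*pi) * exp Y * (2 / (1 + exp Y ^ 2))"
    by (rule mult_right_mono) (simp add: add_pos_nonneg)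
  thus ?thesis unfolding std_normal_density_def one_minus_tanh Y_def[symmetric]
    by (simp add: ac_simps)
qed

lemma h_integral:
  assumes "s > 0"
  shows "integrable lborel (\<lambda>z. 2 * exp (s + sqrt s * z) / (1 + exp (s + sqrt s * z) ^ 2))"
    "(\<integral>z. 2 * exp (s + sqrt s * z) / (1 + exp (s + sqrt s * z) ^ 2) \<partial>lborel) = pi / sqrt s"
proof -
  define h where "h = (\<lambda>z. 2 * exp (s + sqrt s * z) / (1 + exp (s + sqrt s * z) ^ 2))"
  define F where "F = (\<lambda>z. 2 / sqrt s * arctan (exp (s + sqrt s * z)))"
  have ss: "sqrt s > 0" using assms by simp
  have D: "DERIV F x :> h x" for x
  proof -
    define E where "E = exp (s + sqrt s * x)"
    have e: "1 + E^2 > 0" by (simp add: add_pos_nonneg)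
    have "DERIV F x :> 0 * arctan E + inverse (1 + E\<^sup>2) * (E * (0 + (0 * x + 1 * sqrt s))) * (2 / sqrt s)"
      unfolding F_def E_def
      by (rule derivative_eq_intros refl)+
    moreover have "0 * arctan E + inverse (1 + E\<^sup>2) * (E * (0 + (0 * x + 1 * sqrt s))) * (2 / sqrt s) = h x"
      unfolding h_def E_def[symmetric] using ss e by (simp add: field_simps)
    ultimately show ?thesis by simp
  qed
  have nz: "1 + (exp t)\<^sup>2 \<noteq> (0::real)" for t
    using zero_le_power2[of "exp t"] by linarith
  have C: "isCont h x" for x
    unfolding h_def using nz by (auto intro!: continuous_intros)
  have N: "AE x in lborel. -\<infinity> < ereal x \<longrightarrow> ereal x < \<infinity> \<longrightarrow> 0 \<le> h x"
    unfolding h_def by (auto simp: add_pos_nonneg)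
  have lim_top: "(F \<longlongrightarrow> pi / sqrt s) at_top"
  proof -
    have "filterlim (\<lambda>z. s + sqrt s * z) at_top at_top"
      using ss by (auto intro!: filterlim_tendsto_add_at_top filterlim_tendsto_pos_mult_at_top filterlim_ident)
    hence "filterlim (\<lambda>z. exp (s + sqrt s * z)) at_top at_top"
      using exp_at_top filterlim_compose by blast
    hence "((\<lambda>z. arctan (exp (s + sqrt s * z))) \<longlongrightarrow> pi/2) at_top"
      using tendsto_arctan_at_top filterlim_compose by blast
    hence "((\<lambda>z. 2 / sqrt s * arctan (exp (s + sqrt s * z))) \<longlongrightarrow> 2 / sqrt s * (pi/2)) at_top"
      by (intro tendsto_intros)
    thus ?thesis unfolding F_def by simp
  qed
  have lim_bot: "(F \<longlongrightarrow> 0) at_bot"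
  proof -
    have "filterlim (\<lambda>z. s + sqrt s * z) at_bot at_bot"
    proof -
      have "filterlim (\<lambda>z. sqrt s * z) at_bot at_bot"
        using ss by (auto intro!: filterlim_tendsto_pos_mult_at_bot filterlim_ident)
      thus ?thesis using filterlim_tendsto_add_at_bot_iff[of "\<lambda>_. s" s at_bot "\<lambda>z. sqrt s * z"] by simp
    qed
    hence "((\<lambda>z. exp (s + sqrt s * z)) \<longlongrightarrow> 0) at_bot"
      using exp_at_bot filterlim_compose by blast
    hence "((\<lambda>z. 2 / sqrt s * arctan (exp (s + sqrt s * z))) \<longlongrightarrow> 2 / sqrt s * arctan 0) at_bot"
      by (intro tendsto_intros)
    thus ?thesis unfolding F_def by simp
  qed
  have A: "((F \<circ> real_of_ereal) \<longlongrightarrow> 0) (at_right (-\<infinity>))"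
    using lim_bot by (simp add: ereal_tendsto_simps1)
  have B: "((F \<circ> real_of_ereal) \<longlongrightarrow> pi / sqrt s) (at_left \<infinity>)"
    using lim_top by (simp add: ereal_tendsto_simps1)
  note R = interval_integral_FTC_nonneg[of "-\<infinity>" "\<infinity>" F h, OF _ D C N A B]
  from R(1) show "integrable lborel h" by (simp add: set_integrable_def)
  from R(2) show "integral\<^sup>L lborel h = pi / sqrt s"
    by (simp add: interval_lebesgue_integral_def set_lebesgue_integral_def)
qed


lemma g_lower:
  assumes "s > 0"
  shows "(\<integral>z. std_normal_density z * tanh (s + sqrt s * z) \<partial>lborel)
         \<ge> 1 - exp (-s/2) / sqrt (2*pi) * (pi / sqrt s)"
proof -
  define h where "h = (\<lambda>z. 2 * exp (s + sqrt s * z) / (1 + exp (s + sqrt s * z) ^ 2))"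
  define C where "C = exp (-s/2) / sqrt (2*pi)"
  have hi: "integrable lborel h" and hI: "integral\<^sup>L lborel h = pi / sqrt s"
    using h_integral[OF assms] unfolding h_def by auto
  have ni: "integrable lborel (normal_density 0 1)" by simp
  have meas: "(\<lambda>z. std_normal_density z * tanh (s + sqrt s * z)) \<in> borel_measurable lborel"
    unfolding measurable_lborel2 std_normal_density_def
    by (auto intro!: borel_measurable_continuous_onI continuous_intros)
  have fi: "integrable lborel (\<lambda>z. std_normal_density z * tanh (s + sqrt s * z))"
  proof (rule Bochner_Integration.integrable_bound[OF ni meas])
    show "AE x in lborel. norm (std_normal_density x * tanh (s + sqrt s * x)) \<le> norm (normal_density 0 1 x)"
    proof (rule AE_I2)
      fix x
      have "\<bar>tanh (s + sqrt s * x)\<bar> \<le> 1" using tanh_real_bounds[of "s + sqrt s * x"] by auto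
      hence "std_normal_density x * \<bar>tanh (s + sqrt s * x)\<bar> \<le> std_normal_density x * 1"
        by (intro mult_left_mono) auto
      thus "norm (std_normal_density x * tanh (s + sqrt s * x)) \<le> norm (normal_density 0 1 x)"
        by (simp add: abs_mult)
    qed
  qed
  have di: "integrable lborel (\<lambda>z. std_normal_density z * (1 - tanh (s + sqrt s * z)))"
    using Bochner_Integration.integrable_diff[OF ni fi] by (simp add: algebra_simps)
  have eq: "(\<integral>z. std_normal_density z * tanh (s + sqrt s * z) \<partial>lborel)
      = 1 - (\<integral>z. std_normal_density z * (1 - tanh (s + sqrt s * z)) \<partial>lborel)"
    using Bochner_Integration.integral_diff[OF ni fi]
    by (simp add: algebra_simps)
  have "(\<integral>z. std_normal_density z * (1 - tanh (s + sqrt s * z)) \<partial>lborel) \<le> (\<integral>z. C * h z \<partial>lborel)"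
  proof (rule integral_mono[OF di])
    show "integrable lborel (\<lambda>z. C * h z)" using hi by simp
    fix z show "std_normal_density z * (1 - tanh (s + sqrt s * z)) \<le> C * h z"
      unfolding C_def h_def by (rule pointwise[OF assms])
  qed
  also have "\<dots> = C * (pi / sqrt s)" using hI by simp
  finally show ?thesis unfolding eq C_def by simp
qed

lemma s_lower:
  fixes n :: nat
  assumes "n \<ge> 6"
  shows "(9/5::real)^n - (1/5)^n \<ge> 283/50 * n"
  using assms
proof (induction n rule: dec_induct)
  case base
  have "(9/5::real)^6 = 531441/15625" by (simp add: power_divide)
  moreover have "(1/5::real)^6 = 1/15625" by (simp add: power_divide)
  ultimately show ?case by simp
next
  case (step n)
  have "(1/5::real)^(Suc n) \<le> 9/5 * (1/5)^n" by simp
  hence "(9/5::real)^Suc n - (1/5)^Suc n \<ge> 9/5 * ((9/5)^n - (1/5)^n)" by simp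
  moreover have "9/5 * ((9/5)^n - (1/5)^n) \<ge> 9/5 * (283/50 * real n)"
    using step.IH by simp
  moreover have "9/5 * (283/50 * real n) \<ge> 283/50 * real (Suc n)"
    using step.hyps by simp
  ultimately show ?case by linarith
qed

theorem mainTheorem19:
  fixes r :: nat
  assumes "r \<ge> 7"
  shows "\<exists>x::real. 0 < x \<and> x < 1 \<and> g_fun r x > x"
proof (intro exI conjI)
  define s where "s = s_fun r (4/5)"
  have n6: "r - 1 \<ge> 6" using assms by simp
  have rr: "real r - 1 = real (r - 1)" using assms by simp
  have s_eq: "s = ((9/5)^(r-1) - (1/5)^(r-1)) / (2 * real (r - 1))"
    unfolding s_def s_fun_def rr by simp
  have npos: "real (r - 1) > 0" using n6 by simp
  have s_ge: "s \<ge> 283/100"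
    using s_lower[OF n6] npos unfolding s_eq by (simp add: field_simps)
  have spos: "s > 0" using s_ge by simp
  have ex: "exp (-s/2) \<le> 4/15"
  proof -
    have "(11/10::real)^14 \<le> exp (1/10) ^ 14"
      by (intro power_mono) (use exp_ge_add_one_self[of "1/10::real"] in auto)
    also have "\<dots> = exp (real 14 * (1/10))" by (simp only: exp_of_nat_mult)
    finally have a: "(11/10::real)^14 \<le> exp (7/5)" by simp
    have b: "exp (7/5) \<le> exp (s/2)" using s_ge by simp
    moreover have "(15/4::real) \<le> (11/10)^14" by (simp add: power_divide)
    ultimately have "exp (s/2) \<ge> 15/4" using a by linarith
    thus ?thesis by (simp add: exp_minus field_simps)
  qed
  have sq: "sqrt (2*pi) * sqrt s = sqrt (2 * pi * s)" by (simp add: real_sqrt_mult)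
  have pp: "pi < 3/4 * sqrt (2 * pi * s)"
  proof -
    have "(4/3 * pi)^2 < 2 * pi * s"
    proof -
      have "pi < 315/100" using pi_approx(2) by simp
      hence "8 * pi < 9 * s" using s_ge by linarith
      hence "pi * (8 * pi) < pi * (9 * s)" by simp
      thus ?thesis by (simp add: power2_eq_square)
    qed
    hence "4/3 * pi < sqrt (2 * pi * s)" by (rule real_less_rsqrt)
    thus ?thesis by simp
  qed
  have pos2: "sqrt (2 * pi * s) > 0" using spos by simp
  have B: "exp (-s/2) / sqrt (2*pi) * (pi / sqrt s) < 1/5"
  proof -
    have "exp (-s/2) / sqrt (2*pi) * (pi / sqrt s) = exp (-s/2) * (pi / sqrt (2 * pi * s))"
      using sq by (simp add: field_simps)
    also have "\<dots> \<le> 4/15 * (pi / sqrt (2 * pi * s))"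
      using ex pos2 by (intro mult_right_mono) auto
    also have "\<dots> < 4/15 * (3/4)"
      using pp pos2 by (simp add: field_simps)
    finally show ?thesis by simp
  qed
  have "g_fun r (4/5) \<ge> 1 - exp (-s/2) / sqrt (2*pi) * (pi / sqrt s)"
    unfolding g_fun_def s_def[symmetric] using g_lower[OF spos] .
  thus "g_fun r (4/5) > 4/5" using B by linarith
qed simp_all

end
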